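(* Let $J\ge1$ and let $\boldsymbol\lambda_j^0=(\alpha_j^0,\sigma_j^0)$, $j=1,\dots,J$, with $\max_j|\alpha_j^0|<1$ and $\min_j\sigma_j^0>0$. For $\boldsymbol\lambda=(\alpha,\sigma)$ with $|\alpha|<1$ let $h(\boldsymbol\lambda,\theta)=\frac{\sigma^2}{|1-\alpha e^{i\theta}|^2}=\gamma_0(\boldsymbol\lambda)+2\sum_{\ell\ge1}\gamma_\ell(\boldsymbol\lambda)\cos(\ell\theta)$, $\gamma_\ell(\boldsymbol\lambda)=\sigma^2\alpha^\ell/(1-\alpha^2)$, be the spectral density of the univariate AR(1) process $x_t=\alpha x_{t-1}+\sigma z_t$ driven by unit-variance white noise. If $\alpha_1^0,\dots,\alpha_J^0$ are all distinct, then the $J\times J$ matrix $$\mathbf{G}(\boldsymbol\Lambda_J^0)=\frac{1}{2\pi}\int_0^{2\pi}\underline{\mathbf{h}}^0(\theta)(\underline{\mathbf{h}}^0(\theta))^T\,d\theta,\qquad\underline{\mathbf{h}}^0(\theta)=(h(\boldsymbol\lambda_j^0,\theta))_{j=1}^J,$$ is positive definite.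
   Context: This concerns a $p$-dimensional AR(1) process $X_t=\mathbf{A}X_{t-1}+\Sigma^{1/2}Z_t$ with $\mathbf{A},\Sigma$ symmetric/Hermitian, $\|\mathbf{A}\|<1$, simultaneously diagonalized by a unitary $\mathbf{U}$ with $\mathbf{U}^*\mathbf{A}\mathbf{U}=\mathrm{diag}(\alpha_k)$, $\mathbf{U}^*\Sigma\mathbf{U}=\mathrm{diag}(\sigma_k^2)$, whose joint spectrum of $(\mathbf{A},\Sigma)$ is $\sum_{j=1}^J\omega_j\delta_{\boldsymbol\lambda_j^0}$; $h(\boldsymbol\lambda_j^0,\cdot)$ is then the spectral density of the $j$-th type of coordinate process. *)

theory Defs
  imports "HOL-Analysis.Analysis"
begin

definition ar1_spec_density :: "real \<Rightarrow> real \<Rightarrow> real \<Rightarrow> real" where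
  "ar1_spec_density \<alpha> \<sigma> \<theta> = \<sigma>\<^sup>2 / (cmod (1 - complex_of_real \<alpha> * exp (\<i> * complex_of_real \<theta>)))\<^sup>2"

definition G_matrix :: "(nat \<Rightarrow> real) \<Rightarrow> (nat \<Rightarrow> real) \<Rightarrow> nat \<Rightarrow> nat \<Rightarrow> real" where
  "G_matrix \<alpha> \<sigma> i j = (1 / (2 * pi)) *
     integral {0..2*pi} (\<lambda>\<theta>. ar1_spec_density (\<alpha> i) (\<sigma> i) \<theta> * ar1_spec_density (\<alpha> j) (\<sigma> j) \<theta>)"

definition pos_definite :: "nat \<Rightarrow> (nat \<Rightarrow> nat \<Rightarrow> real) \<Rightarrow> bool" where
  "pos_definite J M \<longleftrightarrow>
     (\<forall>i<J. \<forall>j<J. M i j = M j i) \<and>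
     (\<forall>x :: nat \<Rightarrow> real. (\<exists>i<J. x i \<noteq> 0) \<longrightarrow> (\<Sum>i<J. \<Sum>j<J. x i * M i j * x j) > 0)"

end

theory Submission imports Defs "HOL-Computational_Algebra.Polynomial" begin

lemma dens_eq:
  "ar1_spec_density a s t = s\<^sup>2 / (1 + a\<^sup>2 - 2 * a * cos t)"
proof -
  have "(cmod (1 - complex_of_real a * exp (\<i> * complex_of_real t)))\<^sup>2
        = (1 - a * cos t)\<^sup>2 + (a * sin t)\<^sup>2"
    by (simp add: cmod_power2 exp_Euler cos_of_real sin_of_real)
  also have "\<dots> = 1 + a\<^sup>2 * ((sin t)\<^sup>2 + (cos t)\<^sup>2) - 2 * a * cos t"
    by algebra
  also have "\<dots> = 1 + a\<^sup>2 - 2 * a * cos t" by simp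
  finally show ?thesis unfolding ar1_spec_density_def by simp
qed

lemma D_pos:
  fixes a c :: real
  assumes "\<bar>a\<bar> < 1" "\<bar>c\<bar> \<le> 1"
  shows "1 + a\<^sup>2 - 2 * a * c > 0"
proof -
  have "a * c \<le> \<bar>a\<bar> * \<bar>c\<bar>" by (metis abs_ge_self abs_mult)
  also have "\<dots> \<le> \<bar>a\<bar>" by (rule mult_left_le) (use assms(2) in auto)
  finally have "2 * a * c \<le> 2 * \<bar>a\<bar>" by simp
  moreover have "(1 - \<bar>a\<bar>)\<^sup>2 > 0" using assms by simp
  moreover have "(1 - \<bar>a\<bar>)\<^sup>2 = 1 + a\<^sup>2 - 2 * \<bar>a\<bar>" by (simp add: power2_eq_square algebra_simps)
  ultimately show ?thesis by linarith
qed

lemma dens_cont: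
  assumes "\<bar>a\<bar> < 1"
  shows "continuous_on S (ar1_spec_density a s)"
proof -
  have "\<forall>t\<in>S. 1 + a\<^sup>2 - 2 * a * cos t \<noteq> 0"
    using D_pos[OF assms] abs_cos_le_one by (metis less_irrefl)
  then have "continuous_on S (\<lambda>t. s\<^sup>2 / (1 + a\<^sup>2 - 2 * a * cos t))"
    by (intro continuous_intros) auto
  then show ?thesis unfolding dens_eq .
qed

lemma lin_indep:
  fixes J :: nat and a s x :: "nat \<Rightarrow> real"
  assumes a: "\<forall>j<J. \<bar>a j\<bar> < 1" and s: "\<forall>j<J. s j > 0" and inj: "inj_on a {..<J}"
    and z: "\<forall>c\<in>{-1..1}. (\<Sum>j<J. x j * (s j)\<^sup>2 / (1 + (a j)\<^sup>2 - 2 * a j * c)) = 0"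
  shows "\<forall>j<J. x j = 0"
proof -
  define D where "D k c = 1 + (a k)\<^sup>2 - 2 * a k * c" for k c
  define P where "P = (\<Sum>i<J. smult (x i * (s i)\<^sup>2) (\<Prod>k\<in>{..<J}-{i}. [:1 + (a k)\<^sup>2, -2 * a k:]))"
  have evalP: "poly P c = (\<Sum>i<J. x i * (s i)\<^sup>2 * (\<Prod>k\<in>{..<J}-{i}. D k c))" for c
    by (simp add: P_def D_def poly_sum poly_prod algebra_simps)
  have "poly P c = 0" if c: "c \<in> {-1..1}" for c
  proof -
    have Dp: "D k c > 0" if "k < J" for k
      unfolding D_def using D_pos[of "a k" c] a that c by auto
    have "(\<Sum>i<J. x i * (s i)\<^sup>2 * (\<Prod>k\<in>{..<J}-{i}. D k c))
        = (\<Sum>i<J. (\<Prod>k<J. D k c) * (x i * (s i)\<^sup>2 / D i c))"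
    proof (rule sum.cong)
      fix i assume i: "i \<in> {..<J}"
      have "(\<Prod>k<J. D k c) = D i c * (\<Prod>k\<in>{..<J}-{i}. D k c)"
        using prod.remove[OF _ i] by simp
      moreover have "D i c \<noteq> 0" using Dp i by (metis lessThan_iff less_irrefl)
      ultimately show "x i * (s i)\<^sup>2 * (\<Prod>k\<in>{..<J}-{i}. D k c) = (\<Prod>k<J. D k c) * (x i * (s i)\<^sup>2 / D i c)"
        by (simp add: field_simps)
    qed simp
    also have "\<dots> = (\<Prod>k<J. D k c) * (\<Sum>i<J. x i * (s i)\<^sup>2 / D i c)"
      by (simp add: sum_distrib_left)
    also have "\<dots> = 0" using z c unfolding D_def by simp
    finally show ?thesis using evalP by simp
  qed
  have P0: "P = 0"
  proof (rule ccontr)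
    assume "P \<noteq> 0"
    then have "finite {c. poly P c = 0}" by (rule poly_roots_finite)
    moreover have "{-1..1} \<subseteq> {c. poly P c = 0}" using \<open>\<And>c. c \<in> {-1..1} \<Longrightarrow> poly P c = 0\<close> by blast
    ultimately have "finite {-1..1::real}" by (rule finite_subset[rotated])
    then show False using infinite_Icc[of "-1::real" 1] by simp
  qed
  have nz: "x j = 0" if j: "j < J" "a j \<noteq> 0" for j
  proof -
    define p where "p = (1 + (a j)\<^sup>2) / (2 * a j)"
    have Dj: "D j p = 0" unfolding D_def p_def using j by (simp add: field_simps)
    have Dk: "D k p \<noteq> 0" if k: "k < J" "k \<noteq> j" for k
    proof -
      have "D k p * a j = (a j - a k) * (1 - a j * a k)"
        unfolding D_def p_def using j by (simp add: field_simps power2_eq_square)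
      moreover have "a j \<noteq> a k" using inj j k by (metis inj_onD lessThan_iff)
      moreover have "\<bar>a j * a k\<bar> < 1"
      proof -
        have "\<bar>a j\<bar> * \<bar>a k\<bar> \<le> \<bar>a j\<bar>" using a k by (intro mult_left_le) auto
        moreover have "\<bar>a j\<bar> < 1" using a j by auto
        ultimately show ?thesis by (simp add: abs_mult)
      qed
      ultimately show ?thesis by auto
    qed
    have "poly P p = x j * (s j)\<^sup>2 * (\<Prod>k\<in>{..<J}-{j}. D k p)"
    proof -
      have "poly P p = x j * (s j)\<^sup>2 * (\<Prod>k\<in>{..<J}-{j}. D k p)
          + (\<Sum>i\<in>{..<J}-{j}. x i * (s i)\<^sup>2 * (\<Prod>k\<in>{..<J}-{i}. D k p))"
        unfolding evalP using sum.remove[of "{..<J}" j] j by simp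
      moreover have "(\<Sum>i\<in>{..<J}-{j}. x i * (s i)\<^sup>2 * (\<Prod>k\<in>{..<J}-{i}. D k p)) = 0"
      proof (rule sum.neutral, rule ballI)
        fix i assume "i \<in> {..<J}-{j}"
        then have "j \<in> {..<J}-{i}" using j by auto
        then have "(\<Prod>k\<in>{..<J}-{i}. D k p) = 0" using Dj by (metis finite_Diff finite_lessThan prod_zero_iff)
        then show "x i * (s i)\<^sup>2 * (\<Prod>k\<in>{..<J}-{i}. D k p) = 0" by simp
      qed
      ultimately show ?thesis by simp
    qed
    moreover have "(\<Prod>k\<in>{..<J}-{j}. D k p) \<noteq> 0"
      using Dk by (simp add: prod_zero_iff)
    moreover have "s j \<noteq> 0" using s j by (metis less_irrefl)
    ultimately show ?thesis using P0 by simp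
  qed
  show ?thesis
  proof (intro allI impI)
    fix j assume j: "j < J"
    show "x j = 0"
    proof (cases "a j = 0")
      case False then show ?thesis using nz j by blast
    next
      case True
      have others: "x i = 0" if "i < J" "i \<noteq> j" for i
        using nz that True inj j by (metis inj_onD lessThan_iff)
      have "0 = (\<Sum>i<J. x i * (s i)\<^sup>2 / (1 + (a i)\<^sup>2 - 2 * a i * 0))" using z[rule_format, of 0] by simp
      also have "\<dots> = x j * (s j)\<^sup>2 / (1 + (a j)\<^sup>2 - 2 * a j * 0)
          + (\<Sum>i\<in>{..<J}-{j}. x i * (s i)\<^sup>2 / (1 + (a i)\<^sup>2 - 2 * a i * 0))"
        using sum.remove[of "{..<J}" j] j by simp
      also have "(\<Sum>i\<in>{..<J}-{j}. x i * (s i)\<^sup>2 / (1 + (a i)\<^sup>2 - 2 * a i * 0)) = 0"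
        using others by (intro sum.neutral) auto
      finally have "x j * (s j)\<^sup>2 = 0" using True by simp
      then show ?thesis using s j by (metis less_irrefl mult_eq_0_iff power_eq_0_iff)
    qed
  qed
qed


theorem proposition3:
  fixes J :: nat and \<alpha> \<sigma> :: "nat \<Rightarrow> real"
  assumes "J \<ge> 1"
    and "\<forall>j<J. \<bar>\<alpha> j\<bar> < 1"
    and "\<forall>j<J. \<sigma> j > 0"
    and "inj_on \<alpha> {..<J}"
  shows "pos_definite J (G_matrix \<alpha> \<sigma>)"
  unfolding pos_definite_def
proof (intro conjI allI impI)
  fix i j assume "i < J" "j < J"
  show "G_matrix \<alpha> \<sigma> i j = G_matrix \<alpha> \<sigma> j i"
    unfolding G_matrix_def by (simp add: mult.commute)
next
  fix x :: "nat \<Rightarrow> real"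
  assume ex: "\<exists>i<J. x i \<noteq> 0"
  define h where "h i = ar1_spec_density (\<alpha> i) (\<sigma> i)" for i
  define f where "f \<theta> = (\<Sum>i<J. x i * h i \<theta>)" for \<theta>
  have hc: "continuous_on S (h i)" if "i < J" for i S
    unfolding h_def using assms(2) that by (intro dens_cont) auto
  have fc: "continuous_on S f" for S
    unfolding f_def using hc by (intro continuous_intros) auto
  have f2c: "continuous_on S (\<lambda>\<theta>. (f \<theta>)\<^sup>2)" for S
    using fc by (intro continuous_intros)
  have hhi: "(\<lambda>\<theta>. h i \<theta> * h j \<theta>) integrable_on {0..2*pi}" if "i < J" "j < J" for i j
    using hc that by (intro integrable_continuous_interval continuous_intros) auto
  have hhi': "(\<lambda>\<theta>. x i * x j * (h i \<theta> * h j \<theta>)) integrable_on {0..2*pi}" if "i < J" "j < J" for i j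
    using hc that by (intro integrable_continuous_interval continuous_intros) auto
  have "integral {0..2*pi} (\<lambda>\<theta>. (f \<theta>)\<^sup>2)
      = integral {0..2*pi} (\<lambda>\<theta>. \<Sum>i<J. \<Sum>j<J. x i * x j * (h i \<theta> * h j \<theta>))"
    unfolding f_def power2_eq_square sum_product by (simp add: algebra_simps)
  also have "\<dots> = (\<Sum>i<J. integral {0..2*pi} (\<lambda>\<theta>. \<Sum>j<J. x i * x j * (h i \<theta> * h j \<theta>)))"
    using hhi' by (intro integral_sum) (auto intro!: integrable_sum)
  also have "\<dots> = (\<Sum>i<J. \<Sum>j<J. integral {0..2*pi} (\<lambda>\<theta>. x i * x j * (h i \<theta> * h j \<theta>)))"
    using hhi' by (intro sum.cong refl integral_sum) auto
  also have "\<dots> = (\<Sum>i<J. \<Sum>j<J. x i * x j * integral {0..2*pi} (\<lambda>\<theta>. h i \<theta> * h j \<theta>))"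
    by simp
  finally have eq: "(\<Sum>i<J. \<Sum>j<J. x i * G_matrix \<alpha> \<sigma> i j * x j)
      = (1 / (2*pi)) * integral {0..2*pi} (\<lambda>\<theta>. (f \<theta>)\<^sup>2)"
    unfolding G_matrix_def h_def by (simp add: sum_distrib_left algebra_simps)
  have pos: "integral {0..2*pi} (\<lambda>\<theta>. (f \<theta>)\<^sup>2) > 0"
  proof (rule ccontr)
    assume "\<not> ?thesis"
    moreover have "integral {0..2*pi} (\<lambda>\<theta>. (f \<theta>)\<^sup>2) \<ge> 0"
      using f2c by (intro integral_nonneg integrable_continuous_interval) auto
    ultimately have I0: "integral {0..2*pi} (\<lambda>\<theta>. (f \<theta>)\<^sup>2) = 0" by simp
    have hi: "((\<lambda>\<theta>. (f \<theta>)\<^sup>2) has_integral 0) (cbox 0 (2*pi))"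
      using I0 f2c integrable_continuous_interval[of 0 "2*pi" "\<lambda>\<theta>. (f \<theta>)\<^sup>2"]
      by (metis cbox_interval has_integral_integral)
    have fz: "f \<theta> = 0" if "\<theta> \<in> {0..2*pi}" for \<theta>
    proof -
      have "(\<lambda>\<theta>. (f \<theta>)\<^sup>2) \<theta> = 0"
        apply (rule has_integral_0_cbox_imp_0[OF _ _ hi])
        using f2c that by (auto simp: cbox_interval box_real pi_gt_zero[unfolded less_le_not_le, THEN conjunct2])
      then show ?thesis by simp
    qed
    have "\<forall>c\<in>{-1..1}. (\<Sum>j<J. x j * (\<sigma> j)\<^sup>2 / (1 + (\<alpha> j)\<^sup>2 - 2 * \<alpha> j * c)) = 0"
    proof
      fix c :: real assume c: "c \<in> {-1..1}"
      have "arccos c \<in> {0..2*pi}" using c arccos_lbound[of c] arccos_ubound[of c] by auto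
      then have "f (arccos c) = 0" by (rule fz)
      then show "(\<Sum>j<J. x j * (\<sigma> j)\<^sup>2 / (1 + (\<alpha> j)\<^sup>2 - 2 * \<alpha> j * c)) = 0"
        unfolding f_def h_def dens_eq using c cos_arccos[of c] by auto
    qed
    then have "\<forall>j<J. x j = 0" using lin_indep[OF assms(2-4)] by blast
    then show False using ex by blast
  qed
  show "(\<Sum>i<J. \<Sum>j<J. x i * G_matrix \<alpha> \<sigma> i j * x j) > 0"
    unfolding eq using pos by simp
qed

end
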